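(* Let $C>0$ and $p_0\in(0,1)$ with $Cp_0<1$ be constants such that for every $0<p\le p_0$ and $q\in[0,1]$, $\mathcal G(p,q)$ survives with positive probability whenever $q<\frac25p(1-Cp)$ and dies out almost surely whenever $q>\frac25p(1+Cp)$. Then there exist $C'>0$ and $\Omega_0\in\mathbb N$ such that for every integer $\Omega\ge\Omega_0$ the following holds. For any $\rho\in\big(0,(1+\min(p_0,(2C)^{-1}))(\Omega-1)^{-1}\big]$ let $p(\rho)=(\Omega-1)\rho-1$, let $q_b=(\Omega-1)^{-2}$ and $\hat\rho_c=(\Omega-1)^{-1}+\frac52(\Omega-1)^{-3}$. If $\rho>\hat\rho_c+C'\Omega^{-5}$, then $\mathcal G(p(\rho),q_b)$ survives with positive probability; if $\rho<\hat\rho_c-C'\Omega^{-5}$, then $\mathcal G(p(\rho),q_b)$ dies out almost surely.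
   Context: For $p>-1$ and $q\in[0,1]$ the graph process $\mathcal G(p,q)=(G_n)_{n\ge0}$, $G_n=(V_n,E_n)$, is defined recursively. For each $n$, $I_n\subseteq V_n$ is the set of vertices of the $n$-th generation: $I_0=V_0$ and $I_n=V_n\setminus V_{n-1}$ for $n\ge1$. $G_0$ is a single vertex with no edges. For $n\ge1$, given $G_{n-1}$: 1. For each $u\in I_{n-1}$ let $k_u$ be the number of vertices of $G_{n-1}$ at graph distance exactly $3$ from $u$. Each $u\in I_{n-1}$ has an independent Poisson$(1+p)$ number of potential offspring, and each potential offspring is independently deleted with probability $1-(1-q)^{k_u}$. Form $\tilde G_n$ by adding to $G_{n-1}$ a new vertex for each surviving offspring, joined by an edge to its parent; let $\tilde I_n$ be the set of these new vertices, arbitrarily ordered, $Y_n=|\tilde I_n|$. 2. Let $(B_{i,j})_{1\le i<j\le Y_n}$ be i.i.d. Bernoulli$(q)$. For $i<j$, if the $i$th and $j$th vertices of $\tilde I_n$ are at graph distance exactly $4$ in $\tilde G_n$ and $B_{i,j}=1$, identify them. Form $G_n$ and $I_n$ by merging each equivalence class of the equivalence relation generated by these identifications into one vertex, with edge set the union of their edge sets (multi-edges replaced by single edges). Let $Z_n=|I_n|$. The process survives if $Z_n>0$ for all $n\ge1$; otherwise it dies out. *)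

theory Defs
  imports "HOL-Probability.Probability"
begin

text \<open>States of the process: (V, E, I) with V the vertex set (natural-number labels),
  E a symmetric edge relation, I the current (latest) generation.\<close>

type_synonym gstate = "nat set \<times> (nat \<times> nat) set \<times> nat set"

inductive walk :: "(nat \<times> nat) set \<Rightarrow> nat \<Rightarrow> nat \<Rightarrow> nat \<Rightarrow> bool" for E where
  walk_refl: "walk E u u 0"
| walk_step: "walk E u v n \<Longrightarrow> (v, w) \<in> E \<Longrightarrow> walk E u w (Suc n)"

definition dist_eq :: "(nat \<times> nat) set \<Rightarrow> nat \<Rightarrow> nat \<Rightarrow> nat \<Rightarrow> bool" where
  "dist_eq E u v d \<longleftrightarrow> walk E u v d \<and> (\<forall>m<d. \<not> walk E u v m)"

definition gp_init :: gstate where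
  "gp_init = ({0}, {}, {0})"

definition fresh0 :: "nat set \<Rightarrow> nat" where
  "fresh0 V = (if V = {} then 0 else Max V + 1)"

definition k3 :: "nat set \<Rightarrow> (nat \<times> nat) set \<Rightarrow> nat \<Rightarrow> nat" where
  "k3 V E u = card {v \<in> V. dist_eq E u v 3}"

definition offspring_pmf :: "real \<Rightarrow> real \<Rightarrow> nat \<Rightarrow> nat pmf" where
  "offspring_pmf p q k = bind_pmf (poisson_pmf (1 + p)) (\<lambda>N. binomial_pmf N ((1 - q) ^ k))"

text \<open>Given the offspring counts c of the vertices of I, listed in increasing order,
  the children of the j-th parent receive consecutive fresh labels.\<close>
definition child_start :: "nat list \<Rightarrow> (nat \<Rightarrow> nat) \<Rightarrow> nat \<Rightarrow> nat \<Rightarrow> nat" where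
  "child_start us c f j = f + sum_list (map c (take j us))"

definition children :: "nat set \<Rightarrow> nat \<Rightarrow> (nat \<Rightarrow> nat) \<Rightarrow> nat \<Rightarrow> nat set" where
  "children I f c u =
     (let us = sorted_list_of_set I; j = (THE j. j < length us \<and> us ! j = u)
      in {child_start us c f j ..< child_start us c f j + c u})"

definition grow :: "gstate \<Rightarrow> (nat \<Rightarrow> nat) \<Rightarrow> gstate" where
  "grow s c = (case s of (V, E, I) \<Rightarrow>
     let f = fresh0 V;
         Inew = (\<Union>u\<in>I. children I f c u);
         Enew = (\<Union>u\<in>I. \<Union>w\<in>children I f c u. {(u, w), (w, u)})
     in (V \<union> Inew, E \<union> Enew, Inew))"

definition ident_rel :: "gstate \<Rightarrow> (nat \<times> nat \<Rightarrow> bool) \<Rightarrow> (nat \<times> nat) set" where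
  "ident_rel s B = (case s of (V, E, I) \<Rightarrow>
     {(a, b). a \<in> I \<and> b \<in> I \<and> a < b \<and> dist_eq E a b 4 \<and> B (a, b)})"

definition merge :: "gstate \<Rightarrow> (nat \<times> nat \<Rightarrow> bool) \<Rightarrow> gstate" where
  "merge s B = (case s of (V, E, I) \<Rightarrow>
     let R = (ident_rel s B \<union> (ident_rel s B)\<inverse>)\<^sup>*;
         r = (\<lambda>v. Min {w. (v, w) \<in> R})
     in (r ` V, (\<lambda>(a, b). (r a, r b)) ` E, r ` I))"

definition new_pairs :: "nat set \<Rightarrow> (nat \<times> nat) set" where
  "new_pairs I = {(a, b). a \<in> I \<and> b \<in> I \<and> a < b}"

definition gp_step :: "real \<Rightarrow> real \<Rightarrow> gstate \<Rightarrow> gstate pmf" where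
  "gp_step p q s = (case s of (V, E, I) \<Rightarrow>
     do { c \<leftarrow> Pi_pmf I 0 (\<lambda>u. offspring_pmf p q (k3 V E u));
          let s' = grow s c;
          B \<leftarrow> Pi_pmf (new_pairs (snd (snd s'))) False (\<lambda>_. bernoulli_pmf q);
          return_pmf (merge s' B) })"

text \<open>Joint law of (G_n, [Z_k > 0 for all 1 \<le> k \<le> n]).\<close>
fun gp_path :: "real \<Rightarrow> real \<Rightarrow> nat \<Rightarrow> (gstate \<times> bool) pmf" where
  "gp_path p q 0 = return_pmf (gp_init, True)"
| "gp_path p q (Suc n) =
     bind_pmf (gp_path p q n) (\<lambda>(s, b).
       map_pmf (\<lambda>s'. (s', b \<and> snd (snd s') \<noteq> {})) (gp_step p q s))"

definition alive_prob :: "real \<Rightarrow> real \<Rightarrow> nat \<Rightarrow> real" where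
  "alive_prob p q n = measure_pmf.prob (gp_path p q n) {x. snd x}"

text \<open>P(Z_n > 0 for all n \<ge> 1) is the limit (= infimum) of the decreasing sequence of
  probabilities P(Z_1>0,...,Z_n>0), by continuity of measure.\<close>
definition survives_pos :: "real \<Rightarrow> real \<Rightarrow> bool" where
  "survives_pos p q \<longleftrightarrow> (INF n. alive_prob p q n) > 0"

definition dies_out_as :: "real \<Rightarrow> real \<Rightarrow> bool" where
  "dies_out_as p q \<longleftrightarrow> (INF n. alive_prob p q n) = 0"

end

theory Submission
  imports Defs
begin


lemma nn_binomial_mean:
  assumes "0 \<le> r" "r \<le> 1"
  shows "(\<integral>\<^sup>+k. ennreal (real k) \<partial>binomial_pmf n r) = ennreal (real n * r)"
proof (induction n)
  case 0
  then show ?case using assms by (simp add: binomial_pmf_0)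
next
  case (Suc n)
  have nr: "0 \<le> real n * r" using assms by simp
  have "(\<integral>\<^sup>+k. ennreal (real k) \<partial>binomial_pmf (Suc n) r) =
     (\<integral>\<^sup>+b. (\<integral>\<^sup>+k. ennreal (real ((if b then 1 else 0) + k)) \<partial>binomial_pmf n r) \<partial>bernoulli_pmf r)"
    using assms by (subst binomial_pmf_Suc) (simp_all only: nn_integral_bind_pmf atLeastAtMost_iff, simp)
  also have "\<dots> = (\<integral>\<^sup>+b. (if b then 1 else 0) + ennreal (real n * r) \<partial>bernoulli_pmf r)"
  proof (rule nn_integral_cong)
    fix b :: bool
    have "(\<integral>\<^sup>+k. ennreal (real ((if b then 1 else 0) + k)) \<partial>binomial_pmf n r) =
          (\<integral>\<^sup>+k. (if b then 1 else 0) + ennreal (real k) \<partial>binomial_pmf n r)"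
      by (rule nn_integral_cong) (cases b, simp_all add: ennreal_plus)
    also have "\<dots> = (if b then 1 else 0) + ennreal (real n * r)"
      by (subst nn_integral_add) (simp_all add: Suc measure_pmf.emeasure_space_1)
    finally show "(\<integral>\<^sup>+k. ennreal (real ((if b then 1 else 0) + k)) \<partial>binomial_pmf n r) =
          (if b then 1 else 0) + ennreal (real n * r)" .
  qed
  also have "\<dots> = (1 + ennreal (real n * r)) * ennreal r + ennreal (real n * r) * ennreal (1 - r)"
    using assms by (subst nn_integral_bernoulli_pmf) simp_all
  also have "\<dots> = ennreal ((1 + real n * r) * r + (real n * r) * (1 - r))"
    using assms nr by (simp add: ennreal_plus ennreal_mult)
  also have "(1 + real n * r) * r + (real n * r) * (1 - r) = real (Suc n) * r"
    by (simp add: algebra_simps)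
  finally show ?case .
qed


lemma nn_poisson_mean:
  assumes "0 < l"
  shows "(\<integral>\<^sup>+k. ennreal (real k) \<partial>poisson_pmf l) = ennreal l"
proof -
  have s: "(\<lambda>k. l ^ k / fact k) sums exp l"
    using exp_converges[of l] by (simp add: divide_inverse mult.commute)
  have s2: "(\<lambda>k. real (Suc k) * (l ^ Suc k / fact (Suc k) * exp (-l))) sums (l * exp l * exp (-l))"
  proof -
    have "(\<lambda>k. l * exp (-l) * (l ^ k / fact k)) sums (l * exp (-l) * exp l)"
      using sums_mult[OF s] by blast
    moreover have "real (Suc k) * (l ^ Suc k / fact (Suc k) * exp (-l)) = l * exp (-l) * (l ^ k / fact k)" for k
    proof -
      have "fact (Suc k) = real (Suc k) * fact k" by simp
      moreover have "fact k > (0::real)" by simp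
      ultimately show ?thesis by (simp add: field_simps del: of_nat_Suc)
    qed
    ultimately show ?thesis by (simp add: mult_ac)
  qed
  have s3: "(\<lambda>k. real k * (l ^ k / fact k * exp (-l))) sums l"
    using s2 sums_Suc_iff[where f="\<lambda>k. real k * (l ^ k / fact k * exp (-l))"]
    by (simp add: exp_minus field_simps)
  have "(\<integral>\<^sup>+k. ennreal (real k) \<partial>poisson_pmf l) = (\<Sum>k. ennreal (real k * (l ^ k / fact k * exp (-l))))"
    using assms by (simp add: nn_integral_measure_pmf nn_integral_count_space_nat ennreal_mult'[symmetric] mult.commute)
  also have "\<dots> = ennreal l"
    by (rule suminf_ennreal_eq[OF _ s3]) (use assms in auto)
  finally show ?thesis .
qed



definition gp_inv :: "nat \<Rightarrow> gstate \<Rightarrow> bool" where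
  "gp_inv n s \<longleftrightarrow> (case s of (V, E, I) \<Rightarrow> \<exists>g::nat\<Rightarrow>nat. finite V \<and> E \<subseteq> V \<times> V \<and>
     I = {v\<in>V. g v = n} \<and> (\<forall>a b. (a, b) \<in> E \<longrightarrow> g a \<le> g b + 1 \<and> g b \<le> g a + 1) \<and>
     (\<forall>v\<in>V. g v \<le> n) \<and> (\<forall>v\<in>V. 0 < g v \<longrightarrow> (\<exists>w\<in>V. (v, w) \<in> E \<and> g w + 1 = g v)))"

lemma gp_inv_init: "gp_inv 0 gp_init"
  unfolding gp_inv_def gp_init_def by (simp only: prod.case, rule exI[of _ "\<lambda>_. 0"]) auto

lemma children_ge: "x \<in> children I f c u \<Longrightarrow> f \<le> x"
  unfolding children_def child_start_def Let_def by auto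

lemma children_card: "card (children I f c u) = c u"
  unfolding children_def Let_def by simp

lemma children_fin: "finite (children I f c u)"
  unfolding children_def Let_def by simp

lemma fresh0_gt: "finite V \<Longrightarrow> x \<in> V \<Longrightarrow> x < fresh0 V"
  unfolding fresh0_def using Max_ge by fastforce

lemma gp_inv_grow:
  assumes "gp_inv n s" shows "gp_inv (Suc n) (grow s c)"
proof -
  obtain V E I where s: "s = (V, E, I)" by (cases s) auto
  from assms obtain g where fV: "finite V" and EV: "E \<subseteq> V \<times> V" and I: "I = {v\<in>V. g v = n}"
    and ed: "\<forall>a b. (a, b) \<in> E \<longrightarrow> g a \<le> g b + 1 \<and> g b \<le> g a + 1"
    and le: "\<forall>v\<in>V. g v \<le> n" and nb: "\<forall>v\<in>V. 0 < g v \<longrightarrow> (\<exists>w\<in>V. (v, w) \<in> E \<and> g w + 1 = g v)"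
    unfolding gp_inv_def s by auto
  define f where "f = fresh0 V"
  define Inew where "Inew = (\<Union>u\<in>I. children I f c u)"
  define Enew where "Enew = (\<Union>u\<in>I. \<Union>w\<in>children I f c u. {(u, w), (w, u)})"
  have gr: "grow s c = (V \<union> Inew, E \<union> Enew, Inew)"
    unfolding s grow_def Inew_def Enew_def f_def Let_def by simp
  have disj: "x \<in> Inew \<Longrightarrow> x \<notin> V" for x
    using fresh0_gt[OF fV] children_ge unfolding Inew_def f_def by fastforce
  have fI: "finite I" using fV I by simp
  define g' where "g' = (\<lambda>v. if v \<in> V then g v else Suc n)"
  show ?thesis unfolding gr gp_inv_def
  proof (simp only: prod.case, intro exI[of _ g'] conjI)
    show "finite (V \<union> Inew)" using fV fI children_fin unfolding Inew_def by auto
    show "E \<union> Enew \<subseteq> (V \<union> Inew) \<times> (V \<union> Inew)"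
      using EV I unfolding Enew_def Inew_def by blast
    show "Inew = {v \<in> V \<union> Inew. g' v = Suc n}"
      using le disj unfolding g'_def by fastforce
    show "\<forall>a b. (a, b) \<in> E \<union> Enew \<longrightarrow> g' a \<le> g' b + 1 \<and> g' b \<le> g' a + 1"
    proof (intro allI impI)
      fix a b assume "(a, b) \<in> E \<union> Enew"
      then consider "(a, b) \<in> E" | "(a, b) \<in> Enew" by blast
      then show "g' a \<le> g' b + 1 \<and> g' b \<le> g' a + 1"
      proof cases
        case 1
        then show ?thesis using ed EV unfolding g'_def by auto
      next
        case 2
        then obtain u w where "u \<in> I" "w \<in> Inew" "(a, b) = (u, w) \<or> (a, b) = (w, u)"
          unfolding Enew_def Inew_def by blast
        then show ?thesis using disj I unfolding g'_def by auto
      qed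
    qed
    show "\<forall>v\<in>V \<union> Inew. g' v \<le> Suc n" using le unfolding g'_def by auto
    show "\<forall>v\<in>V \<union> Inew. 0 < g' v \<longrightarrow> (\<exists>w\<in>V \<union> Inew. (v, w) \<in> E \<union> Enew \<and> g' w + 1 = g' v)"
    proof (intro ballI impI)
      fix v assume v: "v \<in> V \<union> Inew" "0 < g' v"
      show "\<exists>w\<in>V \<union> Inew. (v, w) \<in> E \<union> Enew \<and> g' w + 1 = g' v"
      proof (cases "v \<in> V")
        case True
        then show ?thesis using nb v unfolding g'_def by fastforce
      next
        case False
        then have "v \<in> Inew" using v by blast
        then obtain u where u: "u \<in> I" "v \<in> children I f c u" unfolding Inew_def by blast
        then have "(v, u) \<in> Enew" unfolding Enew_def by blast
        moreover have "u \<in> V" "g u = n" using u I by auto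
        ultimately show ?thesis using False unfolding g'_def by (intro bexI[of _ u]) auto
      qed
    qed
  qed
qed

lemma R_sub:
  assumes "Rel \<subseteq> I \<times> I" "(x, y) \<in> (Rel \<union> Rel\<inverse>)\<^sup>*"
  shows "x = y \<or> (x \<in> I \<and> y \<in> I)"
  using assms(2) by (induction rule: rtrancl_induct) (use assms(1) in auto)

lemma gp_inv_merge:
  assumes "gp_inv n s" shows "gp_inv n (merge s B)"
proof -
  obtain V E I where s: "s = (V, E, I)" by (cases s) auto
  from assms obtain g where fV: "finite V" and EV: "E \<subseteq> V \<times> V" and I: "I = {v\<in>V. g v = n}"
    and ed: "\<forall>a b. (a, b) \<in> E \<longrightarrow> g a \<le> g b + 1 \<and> g b \<le> g a + 1"
    and le: "\<forall>v\<in>V. g v \<le> n" and nb: "\<forall>v\<in>V. 0 < g v \<longrightarrow> (\<exists>w\<in>V. (v, w) \<in> E \<and> g w + 1 = g v)"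
    unfolding gp_inv_def s by auto
  define Rel where "Rel = ident_rel s B"
  have RelI: "Rel \<subseteq> I \<times> I" unfolding Rel_def s ident_rel_def by auto
  define R where "R = (Rel \<union> Rel\<inverse>)\<^sup>*"
  define r where "r = (\<lambda>v. Min {w. (v, w) \<in> R})"
  have mg: "merge s B = (r ` V, (\<lambda>(a, b). (r a, r b)) ` E, r ` I)"
    unfolding s merge_def r_def R_def Rel_def[unfolded s] Let_def by simp
  have fI: "finite I" using fV I by simp
  have rx: "(x, r x) \<in> R" for x
  proof -
    have sub: "{w. (x, w) \<in> R} \<subseteq> insert x I" using R_sub[OF RelI] unfolding R_def by blast
    have "finite {w. (x, w) \<in> R}" using finite_subset[OF sub] fI by simp
    moreover have "x \<in> {w. (x, w) \<in> R}" unfolding R_def by simp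
    ultimately have "Min {w. (x, w) \<in> R} \<in> {w. (x, w) \<in> R}" by (intro Min_in) auto
    then show ?thesis unfolding r_def by simp
  qed
  have rcase: "r x = x \<or> (x \<in> I \<and> r x \<in> I)" for x
    using R_sub[OF RelI, of x "r x"] rx[of x] unfolding R_def by auto
  have gr: "g (r x) = g x" for x using rcase[of x] I by auto
  have rV: "x \<in> V \<Longrightarrow> r x \<in> V" for x using rcase[of x] I by auto
  show ?thesis unfolding mg gp_inv_def
  proof (simp only: prod.case, intro exI[of _ g] conjI)
    show "finite (r ` V)" using fV by simp
    show "(\<lambda>(a, b). (r a, r b)) ` E \<subseteq> r ` V \<times> r ` V" using EV by auto
    show "r ` I = {v \<in> r ` V. g v = n}"
    proof
      show "r ` I \<subseteq> {v \<in> r ` V. g v = n}" using I gr by auto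
      show "{v \<in> r ` V. g v = n} \<subseteq> r ` I" using I gr by auto
    qed
    show "\<forall>a b. (a, b) \<in> (\<lambda>(a, b). (r a, r b)) ` E \<longrightarrow> g a \<le> g b + 1 \<and> g b \<le> g a + 1"
      using ed gr by auto
    show "\<forall>v\<in>r ` V. g v \<le> n" using le gr by auto
    show "\<forall>v\<in>r ` V. 0 < g v \<longrightarrow> (\<exists>w\<in>r ` V. (v, w) \<in> (\<lambda>(a, b). (r a, r b)) ` E \<and> g w + 1 = g v)"
    proof (intro ballI impI)
      fix v' assume "v' \<in> r ` V" "0 < g v'"
      then obtain v where v: "v \<in> V" "v' = r v" by blast
      then have "0 < g v" using \<open>0 < g v'\<close> gr by simp
      then obtain w where "w \<in> V" "(v, w) \<in> E" "g w + 1 = g v" using nb v by metis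
      then show "\<exists>w\<in>r ` V. (v', w) \<in> (\<lambda>(a, b). (r a, r b)) ` E \<and> g w + 1 = g v'"
        using gr v by (intro bexI[of _ "r w"]) force+
    qed
  qed
qed

lemma walk_prepend: "walk E v w m \<Longrightarrow> (u, v) \<in> E \<Longrightarrow> walk E u w (Suc m)"
  by (induction rule: walk.induct) (auto intro: walk.intros)

lemma walk_lower:
  assumes ed: "\<forall>a b. (a, b) \<in> E \<longrightarrow> g a \<le> g b + 1 \<and> g b \<le> g a + 1"
  shows "walk E u v m \<Longrightarrow> g u \<le> g v + m"
proof (induction rule: walk.induct)
  case (walk_step v m w)
  then show ?case using ed by fastforce
qed simp

lemma walk_down:
  assumes nb: "\<forall>v\<in>V. 0 < g v \<longrightarrow> (\<exists>w\<in>V. (v, w) \<in> E \<and> g w + 1 = g v)"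
  shows "v \<in> V \<Longrightarrow> g v = m + j \<Longrightarrow> \<exists>w\<in>V. walk E v w j \<and> g w = m"
proof (induction j arbitrary: m)
  case 0
  then show ?case by (auto intro: walk.intros)
next
  case (Suc j)
  then obtain w1 where "w1 \<in> V" "walk E v w1 j" "g w1 = Suc m" by fastforce
  then obtain w where "w \<in> V" "(w1, w) \<in> E" "g w + 1 = g w1" using nb by fastforce
  then show ?case using \<open>walk E v w1 j\<close> \<open>g w1 = Suc m\<close> by (intro bexI[of _ w]) (auto intro: walk.intros)
qed

lemma k3_pos:
  assumes "gp_inv n (V, E, I)" "3 \<le> n" "u \<in> I"
  shows "1 \<le> k3 V E u"
proof -
  from assms(1) obtain g where fV: "finite V" and I: "I = {v\<in>V. g v = n}"
    and ed: "\<forall>a b. (a, b) \<in> E \<longrightarrow> g a \<le> g b + 1 \<and> g b \<le> g a + 1"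
    and nb: "\<forall>v\<in>V. 0 < g v \<longrightarrow> (\<exists>w\<in>V. (v, w) \<in> E \<and> g w + 1 = g v)"
    unfolding gp_inv_def by auto
  have "u \<in> V" "g u = (n - 3) + 3" using assms I by auto
  then obtain w where w: "w \<in> V" "walk E u w 3" "g w = n - 3" using walk_down[OF nb] by blast
  have "dist_eq E u w 3"
    unfolding dist_eq_def
  proof (intro conjI allI impI notI)
    show "walk E u w 3" by fact
    fix m assume "m < (3::nat)" "walk E u w m"
    then have "g u \<le> g w + m" using walk_lower[OF ed] by blast
    then show False using \<open>m < 3\<close> \<open>g u = _\<close> w(3) assms(2) by simp
  qed
  then have "w \<in> {v \<in> V. dist_eq E u v 3}" using w by simp
  moreover have "finite {v \<in> V. dist_eq E u v 3}" using fV by simp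
  ultimately show ?thesis unfolding k3_def by (metis One_nat_def Suc_leI card_gt_0_iff empty_iff)
qed


lemma nn_offspring_mean:
  assumes "-1 < p" "0 \<le> q" "q \<le> 1"
  shows "(\<integral>\<^sup>+k. ennreal (real k) \<partial>offspring_pmf p q K) = ennreal ((1 + p) * (1 - q) ^ K)"
proof -
  define r where "r = (1 - q) ^ K"
  have r: "0 \<le> r" "r \<le> 1" using assms unfolding r_def by (auto intro: power_le_one)
  have "(\<integral>\<^sup>+k. ennreal (real k) \<partial>offspring_pmf p q K) =
        (\<integral>\<^sup>+N. (\<integral>\<^sup>+k. ennreal (real k) \<partial>binomial_pmf N r) \<partial>poisson_pmf (1 + p))"
    unfolding offspring_pmf_def r_def by simp
  also have "\<dots> = (\<integral>\<^sup>+N. ennreal (real N) * ennreal r \<partial>poisson_pmf (1 + p))"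
    using r by (intro nn_integral_cong) (simp add: nn_binomial_mean ennreal_mult)
  also have "\<dots> = ennreal (1 + p) * ennreal r"
    using assms by (subst nn_integral_multc) (simp_all add: nn_poisson_mean)
  also have "\<dots> = ennreal ((1 + p) * r)" by (rule ennreal_mult[symmetric]) (use assms r in auto)
  finally show ?thesis unfolding r_def .
qed

lemma card_merge_grow:
  assumes "finite I"
  shows "card (snd (snd (merge (grow (V, E, I) c) B))) \<le> (\<Sum>u\<in>I. c u)"
proof -
  define f where "f = fresh0 V"
  define Inew where "Inew = (\<Union>u\<in>I. children I f c u)"
  define Enew where "Enew = (\<Union>u\<in>I. \<Union>w\<in>children I f c u. {(u, w), (w, u)})"
  have gr: "grow (V, E, I) c = (V \<union> Inew, E \<union> Enew, Inew)"
    unfolding grow_def Inew_def Enew_def f_def Let_def by simp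
  have fin: "finite Inew" using assms children_fin unfolding Inew_def by auto
  obtain r where mg: "snd (snd (merge (V \<union> Inew, E \<union> Enew, Inew) B)) = r ` Inew"
    unfolding merge_def Let_def by auto
  have "card (r ` Inew) \<le> card Inew" using fin by (rule card_image_le)
  also have "card Inew \<le> (\<Sum>u\<in>I. card (children I f c u))"
    unfolding Inew_def by (rule card_UN_le[OF assms])
  also have "\<dots> = (\<Sum>u\<in>I. c u)" by (simp add: children_card)
  finally show ?thesis unfolding gr mg .
qed

lemma gp_step_eq:
  "gp_step p q (V, E, I) = bind_pmf (Pi_pmf I 0 (\<lambda>u. offspring_pmf p q (k3 V E u)))
     (\<lambda>c. bind_pmf (Pi_pmf (new_pairs (snd (snd (grow (V, E, I) c)))) False (\<lambda>_. bernoulli_pmf q))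
        (\<lambda>B. return_pmf (merge (grow (V, E, I) c) B)))"
  unfolding gp_step_def Let_def by simp

lemma step_support:
  assumes "s' \<in> set_pmf (gp_step p q s)"
  shows "\<exists>c B. s' = merge (grow s c) B"
proof -
  obtain V E I where s: "s = (V, E, I)" by (cases s) auto
  show ?thesis using assms unfolding s gp_step_eq by auto
qed

lemma step_mean:
  assumes fI: "finite I" and p: "-1 < p" and q: "0 \<le> q" "q \<le> 1" and K: "\<forall>u\<in>I. K \<le> k3 V E u"
  shows "(\<integral>\<^sup>+s'. ennreal (real (card (snd (snd s')))) \<partial>gp_step p q (V, E, I))
           \<le> ennreal ((1 + p) * (1 - q) ^ K) * ennreal (real (card I))"
proof -
  define F where "F = (\<lambda>u. offspring_pmf p q (k3 V E u))"
  have "(\<integral>\<^sup>+s'. ennreal (real (card (snd (snd s')))) \<partial>gp_step p q (V, E, I)) =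
     (\<integral>\<^sup>+c. (\<integral>\<^sup>+B. ennreal (real (card (snd (snd (merge (grow (V, E, I) c) B)))))
        \<partial>Pi_pmf (new_pairs (snd (snd (grow (V, E, I) c)))) False (\<lambda>_. bernoulli_pmf q)) \<partial>Pi_pmf I 0 F)"
    unfolding gp_step_eq F_def by simp
  also have "\<dots> \<le> (\<integral>\<^sup>+c. ennreal (real (\<Sum>u\<in>I. c u)) \<partial>Pi_pmf I 0 F)"
  proof (rule nn_integral_mono)
    fix c
    have "(\<integral>\<^sup>+B. ennreal (real (card (snd (snd (merge (grow (V, E, I) c) B)))))
        \<partial>Pi_pmf (new_pairs (snd (snd (grow (V, E, I) c)))) False (\<lambda>_. bernoulli_pmf q))
      \<le> (\<integral>\<^sup>+B. ennreal (real (\<Sum>u\<in>I. c u))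
        \<partial>Pi_pmf (new_pairs (snd (snd (grow (V, E, I) c)))) False (\<lambda>_. bernoulli_pmf q))"
      by (intro nn_integral_mono ennreal_leI, unfold of_nat_le_iff, rule card_merge_grow[OF fI])
    also have "\<dots> = ennreal (real (\<Sum>u\<in>I. c u))"
      by (simp add: measure_pmf.emeasure_space_1)
    finally show "(\<integral>\<^sup>+B. ennreal (real (card (snd (snd (merge (grow (V, E, I) c) B)))))
        \<partial>Pi_pmf (new_pairs (snd (snd (grow (V, E, I) c)))) False (\<lambda>_. bernoulli_pmf q))
      \<le> ennreal (real (\<Sum>u\<in>I. c u))" .
  qed
  also have "\<dots> = (\<integral>\<^sup>+c. (\<Sum>u\<in>I. ennreal (real (c u))) \<partial>Pi_pmf I 0 F)"
    by (intro nn_integral_cong) (simp add: sum_ennreal)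
  also have "\<dots> = (\<Sum>u\<in>I. (\<integral>\<^sup>+c. ennreal (real (c u)) \<partial>Pi_pmf I 0 F))"
    by (subst nn_integral_sum) simp_all
  also have "\<dots> = (\<Sum>u\<in>I. (\<integral>\<^sup>+k. ennreal (real k) \<partial>F u))"
  proof (rule sum.cong)
    fix u assume u: "u \<in> I"
    have "(\<integral>\<^sup>+c. ennreal (real (c u)) \<partial>Pi_pmf I 0 F) =
          (\<integral>\<^sup>+k. ennreal (real k) \<partial>map_pmf (\<lambda>f. f u) (Pi_pmf I 0 F))"
      by simp
    also have "map_pmf (\<lambda>f. f u) (Pi_pmf I 0 F) = F u"
      using Pi_pmf_component[OF fI, of u 0 F] u by simp
    finally show "(\<integral>\<^sup>+c. ennreal (real (c u)) \<partial>Pi_pmf I 0 F) = (\<integral>\<^sup>+k. ennreal (real k) \<partial>F u)" .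
  qed simp
  also have "\<dots> = (\<Sum>u\<in>I. ennreal ((1 + p) * (1 - q) ^ k3 V E u))"
    unfolding F_def using p q by (simp add: nn_offspring_mean)
  also have "\<dots> \<le> (\<Sum>u\<in>I. ennreal ((1 + p) * (1 - q) ^ K))"
  proof (rule sum_mono)
    fix u assume "u \<in> I"
    then have "(1 - q) ^ k3 V E u \<le> (1 - q) ^ K" using K q by (intro power_decreasing) auto
    then show "ennreal ((1 + p) * (1 - q) ^ k3 V E u) \<le> ennreal ((1 + p) * (1 - q) ^ K)"
      using p by (intro ennreal_leI mult_left_mono) auto
  qed
  also have "\<dots> = ennreal ((1 + p) * (1 - q) ^ K) * ennreal (real (card I))"
    by (simp add: mult.commute ennreal_of_nat_eq_real_of_nat)
  finally show ?thesis .
qed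


lemma path_support:
  "x \<in> set_pmf (gp_path p q n) \<Longrightarrow> gp_inv n (fst x) \<and> (snd x \<longrightarrow> snd (snd (fst x)) \<noteq> {})"
proof (induction n arbitrary: x)
  case 0
  then show ?case using gp_inv_init by (simp add: gp_init_def)
next
  case (Suc n)
  then obtain s b s' where sb: "(s, b) \<in> set_pmf (gp_path p q n)" and s': "s' \<in> set_pmf (gp_step p q s)"
    and x: "x = (s', b \<and> snd (snd s') \<noteq> {})"
    by (auto simp: set_bind_pmf)
  from Suc.IH[OF sb] have "gp_inv n s" by simp
  moreover obtain c B where "s' = merge (grow s c) B" using step_support[OF s'] by blast
  ultimately have "gp_inv (Suc n) s'" using gp_inv_grow gp_inv_merge by blast
  then show ?case using x by simp
qed

definition Mexp :: "real \<Rightarrow> real \<Rightarrow> nat \<Rightarrow> ennreal" where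
  "Mexp p q n = (\<integral>\<^sup>+x. ennreal (real (card (snd (snd (fst x))))) \<partial>gp_path p q n)"

lemma Mexp_Suc:
  "Mexp p q (Suc n) = (\<integral>\<^sup>+x. (\<integral>\<^sup>+s'. ennreal (real (card (snd (snd s')))) \<partial>gp_step p q (fst x)) \<partial>gp_path p q n)"
  unfolding Mexp_def by (simp add: case_prod_beta)

lemma Mexp_step:
  assumes p: "-1 < p" and q: "0 \<le> q" "q \<le> 1" and K: "K = 0 \<or> (K = 1 \<and> 3 \<le> n)"
  shows "Mexp p q (Suc n) \<le> ennreal ((1 + p) * (1 - q) ^ K) * Mexp p q n"
proof -
  have "Mexp p q (Suc n) \<le> (\<integral>\<^sup>+x. ennreal ((1 + p) * (1 - q) ^ K) * ennreal (real (card (snd (snd (fst x))))) \<partial>gp_path p q n)"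
    unfolding Mexp_Suc
  proof (rule nn_integral_mono_AE, unfold AE_measure_pmf_iff, intro ballI)
    fix x assume x: "x \<in> set_pmf (gp_path p q n)"
    obtain V E I where fx: "fst x = (V, E, I)" by (cases "fst x") auto
    have inv: "gp_inv n (V, E, I)" using path_support[OF x] fx by simp
    then have fI: "finite I" unfolding gp_inv_def by auto
    have KK: "\<forall>u\<in>I. K \<le> k3 V E u" using K k3_pos[OF inv] by auto
    show "(\<integral>\<^sup>+s'. ennreal (real (card (snd (snd s')))) \<partial>gp_step p q (fst x))
          \<le> ennreal ((1 + p) * (1 - q) ^ K) * ennreal (real (card (snd (snd (fst x)))))"
      unfolding fx using step_mean[OF fI p q KK] by simp
  qed
  also have "\<dots> = ennreal ((1 + p) * (1 - q) ^ K) * Mexp p q n"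
    unfolding Mexp_def by (rule nn_integral_cmult) simp
  finally show ?thesis .
qed

lemma alive_le_Mexp:
  "ennreal (alive_prob p q n) \<le> Mexp p q n"
proof -
  have "ennreal (alive_prob p q n) = emeasure (measure_pmf (gp_path p q n)) {x. snd x}"
    unfolding alive_prob_def by (simp add: measure_pmf.emeasure_eq_measure)
  also have "\<dots> = (\<integral>\<^sup>+x. indicator {x. snd x} x \<partial>gp_path p q n)"
    by simp
  also have "\<dots> \<le> Mexp p q n"
    unfolding Mexp_def
  proof (rule nn_integral_mono_AE, unfold AE_measure_pmf_iff, intro ballI)
    fix x assume x: "x \<in> set_pmf (gp_path p q n)"
    obtain V E I where fx: "fst x = (V, E, I)" by (cases "fst x") auto
    have inv: "gp_inv n (V, E, I)" and ne: "snd x \<longrightarrow> I \<noteq> {}" using path_support[OF x] fx by auto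
    then have fI: "finite I" unfolding gp_inv_def by auto
    show "indicator {x. snd x} x \<le> ennreal (real (card (snd (snd (fst x)))))"
    proof (cases "snd x")
      case True
      then have "1 \<le> card I" using ne fI by (simp add: Suc_le_eq card_gt_0_iff)
      then show ?thesis using True fx by (simp add: ennreal_of_nat_eq_real_of_nat[symmetric])
    qed simp
  qed
  finally show ?thesis .
qed

lemma dies_subcrit:
  assumes p: "-1 < p" "p \<le> 0" and q: "0 < q" "q \<le> 1"
  shows "dies_out_as p q"
proof -
  define a where "a = (1 + p) * (1 - q)"
  have a: "0 \<le> a" unfolding a_def using p q by (auto intro: mult_nonneg_nonneg)
  have "(1 + p) * (1 - q) \<le> 1 * (1 - q)" using p q by (intro mult_right_mono) auto
  then have a1: "a < 1" using q unfolding a_def by simp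
  have M1: "Mexp p q n \<le> 1" for n
  proof (induction n)
    case 0
    then show ?case unfolding Mexp_def by (simp add: gp_init_def measure_pmf.emeasure_space_1)
  next
    case (Suc n)
    have "Mexp p q (Suc n) \<le> ennreal ((1 + p) * (1 - q) ^ 0) * Mexp p q n"
      using Mexp_step[of p q 0 n] p q by simp
    also have "\<dots> \<le> 1 * 1"
      using Suc p by (intro mult_mono) (auto simp: ennreal_le_1)
    finally show ?case by simp
  qed
  have M3: "Mexp p q (n + 3) \<le> ennreal (a ^ n)" for n
  proof (induction n)
    case 0
    then show ?case using M1[of 3] by simp
  next
    case (Suc n)
    have "Mexp p q (Suc (n + 3)) \<le> ennreal ((1 + p) * (1 - q) ^ 1) * Mexp p q (n + 3)"
      using Mexp_step[of p q 1 "n + 3"] p q by simp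
    also have "\<dots> \<le> ennreal a * ennreal (a ^ n)"
      using Suc unfolding a_def by (intro mult_mono) auto
    also have "\<dots> = ennreal (a ^ Suc n)" using a by (simp add: ennreal_mult[symmetric])
    finally show ?case by simp
  qed
  have le: "alive_prob p q (n + 3) \<le> a ^ n" for n
    using order.trans[OF alive_le_Mexp M3[of n]] a by (simp add: ennreal_le_iff)
  have nn: "0 \<le> alive_prob p q n" for n unfolding alive_prob_def by simp
  define L where "L = (INF n. alive_prob p q n)"
  have bdd: "bdd_below (range (alive_prob p q))" using nn by (intro bdd_belowI) auto
  have L0: "0 \<le> L" unfolding L_def using nn by (intro cINF_greatest) auto
  have Lle: "L \<le> a ^ n" for n
    unfolding L_def using cINF_lower[OF bdd, of "n + 3"] le[of n] by simp
  have "L \<le> 0"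
  proof (rule ccontr)
    assume "\<not> L \<le> 0"
    then have "0 < L" by simp
    then obtain n where "a ^ n < L" using real_arch_pow_inv[OF _ a1] by blast
    then show False using Lle[of n] by simp
  qed
  then show ?thesis unfolding dies_out_as_def L_def[symmetric] using L0 by simp
qed


lemma surv_arith:
  fixes m C e p :: real
  assumes "0 < C" "1 \<le> m" "C * (5 / (2 * m^2) + e)^2 \<le> e" "p > 5 / (2 * m^2) + e" "p \<le> 1 / (2 * C)"
    "0 \<le> e"
  shows "1 / m^2 < 2/5 * p * (1 - C * p)"
proof -
  define p1 where "p1 = 5 / (2 * m^2) + e"
  have h5: "0 < 5 / (2 * m^2)" using assms by simp
  have p1: "0 < p1" "p1 < p" unfolding p1_def using h5 assms(4) assms(6) by linarith+
  have "2 * C * p \<le> 1" using assms by (simp add: field_simps)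
  moreover have "C * p1 < C * p" using p1(2) assms(1) by simp
  moreover have "C * (p + p1) = C * p + C * p1" "2 * C * p = 2 * (C * p)" by (simp_all add: algebra_simps)
  ultimately have "C * (p + p1) < 1" by linarith
  then have "0 < (p - p1) * (1 - C * (p + p1))" using p1 by simp
  then have "p1 - C * p1^2 < p - C * p^2" by (simp add: algebra_simps power2_eq_square)
  moreover have "p1 - C * p1^2 \<ge> 5 / (2 * m^2)" using assms unfolding p1_def by simp
  ultimately have "5 / (2 * m^2) < p * (1 - C * p)" by (simp add: algebra_simps power2_eq_square)
  then show ?thesis using assms by (simp add: field_simps)
qed

lemma die_arith:
  fixes m C e p :: real
  assumes "0 < C" "1 \<le> m" "C * (5 / (2 * m^2))^2 \<le> e" "0 < p" "p < 5 / (2 * m^2) - e"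
  shows "1 / m^2 > 2/5 * p * (1 + C * p)"
proof -
  define p2 where "p2 = 5 / (2 * m^2)"
  have "0 \<le> C * (5 / (2 * m^2))^2" using assms by simp
  then have "0 \<le> e" using assms by linarith
  then have p2: "p < p2" "0 < p2" using assms unfolding p2_def by auto
  have "C * p^2 \<le> C * p2^2" using p2 assms by (intro mult_left_mono power_mono) auto
  then have "p + C * p^2 < 5 / (2 * m^2)" using assms unfolding p2_def by linarith
  then have "p * (1 + C * p) < 5 / (2 * m^2)" by (simp add: algebra_simps power2_eq_square)
  then show ?thesis using assms by (simp add: field_simps)
qed

lemma eps_arith:
  fixes m C :: real
  assumes "0 < C" "600 * C + 2 \<le> m"
  shows "C * (5 / (2 * m^2) + m * (300 * C) / (m + 1)^5)^2 \<le> m * (300 * C) / (m + 1)^5"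
proof -
  have m: "2 \<le> m" "0 < m" using assms by auto
  define e where "e = m * (300 * C) / (m + 1)^5"
  have up: "(m + 1)^5 \<le> 32 * m^5"
  proof -
    have "(m + 1)^5 \<le> (2 * m)^5" using m by (intro power_mono) auto
    then show ?thesis by simp
  qed
  have lo: "m^5 \<le> (m + 1)^5" using m by (intro power_mono) auto
  have pos5: "0 < (m + 1)^5" using m by simp
  have e_lo: "300 * C / (32 * m^4) \<le> e"
  proof -
    have "300 * C / (32 * m^4) = m * (300 * C) / (32 * m^5)" using m by (simp add: field_simps power_def)
    also have "\<dots> \<le> e" unfolding e_def using up pos5 m assms
      by (intro divide_left_mono) (auto intro: mult_pos_pos)
    finally show ?thesis .
  qed
  have e_up: "e \<le> 300 * C / m^4"
  proof -
    have "e \<le> m * (300 * C) / m^5" unfolding e_def using lo m assms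
      by (intro divide_left_mono) auto
    also have "\<dots> = 300 * C / m^4" using m by (simp add: field_simps power_def)
    finally show ?thesis .
  qed
  have m2: "600 * C \<le> m^2" using assms m by (smt (verit) power2_eq_square mult_le_cancel_left1)
  have "300 * C / m^4 \<le> 1 / (2 * m^2)"
    using m2 m by (simp add: field_simps power_def)
  moreover have "5 / (2 * m^2) + 1 / (2 * m^2) = 3 / m^2" using m by (simp add: field_simps)
  ultimately have "5 / (2 * m^2) + e \<le> 3 / m^2" using e_up by linarith
  moreover have "0 \<le> 5 / (2 * m^2) + e" unfolding e_def using m assms by simp
  ultimately have "(5 / (2 * m^2) + e)^2 \<le> (3 / m^2)^2" by (intro power_mono) auto
  then have "C * (5 / (2 * m^2) + e)^2 \<le> C * (9 / m^4)"
    using assms by (intro mult_left_mono) (auto simp: power_divide)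
  also have "\<dots> \<le> 300 * C / (32 * m^4)" using assms m by (simp add: field_simps)
  also have "\<dots> \<le> e" by (rule e_lo)
  finally show ?thesis unfolding e_def .
qed


theorem corollary1p2:
  fixes C p0 :: real
  assumes "C > 0" and "0 < p0" and "p0 < 1" and "C * p0 < 1"
    and hyp: "\<And>p q. 0 < p \<Longrightarrow> p \<le> p0 \<Longrightarrow> 0 \<le> q \<Longrightarrow> q \<le> 1 \<Longrightarrow>
        (q < 2/5 * p * (1 - C * p) \<longrightarrow> survives_pos p q) \<and>
        (q > 2/5 * p * (1 + C * p) \<longrightarrow> dies_out_as p q)"
  shows "\<exists>C' > 0. \<exists>\<Omega>0 :: nat. \<forall>\<Omega> :: nat. \<Omega> \<ge> \<Omega>0 \<longrightarrow>
     (\<forall>\<rho> :: real. 0 < \<rho> \<and> \<rho> \<le> (1 + min p0 (1 / (2 * C))) / (real \<Omega> - 1) \<longrightarrow>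
        (let p\<rho> = (real \<Omega> - 1) * \<rho> - 1;
             qb = 1 / (real \<Omega> - 1)^2;
             \<rho>c = 1 / (real \<Omega> - 1) + 5/2 * (1 / (real \<Omega> - 1)^3)
         in (\<rho> > \<rho>c + C' / real \<Omega> ^ 5 \<longrightarrow> survives_pos p\<rho> qb) \<and>
            (\<rho> < \<rho>c - C' / real \<Omega> ^ 5 \<longrightarrow> dies_out_as p\<rho> qb)))"
proof (intro exI[of _ "300 * C"] conjI exI[of _ "nat \<lceil>600 * C\<rceil> + 3"] allI impI)
  show "0 < 300 * C" using assms(1) by simp
  fix \<Omega> :: nat and \<rho> :: real
  assume \<Omega>: "nat \<lceil>600 * C\<rceil> + 3 \<le> \<Omega>" and \<rho>: "0 < \<rho> \<and> \<rho> \<le> (1 + min p0 (1 / (2 * C))) / (real \<Omega> - 1)"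
  define m where "m = real \<Omega> - 1"
  have "600 * C \<le> real (nat \<lceil>600 * C\<rceil>)" by linarith
  moreover have "real (nat \<lceil>600 * C\<rceil>) + 3 \<le> real \<Omega>" using \<Omega> by linarith
  ultimately have mC: "600 * C + 2 \<le> m" unfolding m_def by linarith
  then have m: "2 \<le> m" "0 < m" using assms(1) by auto
  have Om: "real \<Omega> = m + 1" unfolding m_def by simp
  define p where "p = m * \<rho> - 1"
  define q where "q = 1 / m^2"
  define e where "e = m * (300 * C) / (m + 1)^5"
  have e0: "0 \<le> e" unfolding e_def using m assms(1) by simp
  have eps: "C * (5 / (2 * m^2) + e)^2 \<le> e" unfolding e_def by (rule eps_arith[OF assms(1) mC])
  have eps2: "C * (5 / (2 * m^2))^2 \<le> e"
  proof -
    have "0 \<le> 5 / (2 * m^2)" by simp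
    then have "(5 / (2 * m^2))^2 \<le> (5 / (2 * m^2) + e)^2" using e0 by (intro power_mono) auto
    then have "C * (5 / (2 * m^2))^2 \<le> C * (5 / (2 * m^2) + e)^2" using assms(1) by simp
    then show ?thesis using eps by linarith
  qed
  have q: "0 < q" "q \<le> 1" unfolding q_def using m by (auto simp: power_le_one_iff)
  have pgt: "-1 < p" unfolding p_def using m \<rho> by simp
  have pmu: "p \<le> min p0 (1 / (2 * C))"
  proof -
    have "m * \<rho> \<le> m * ((1 + min p0 (1 / (2 * C))) / m)" using \<rho> m unfolding m_def by (intro mult_left_mono) auto
    also have "m * ((1 + min p0 (1 / (2 * C))) / m) = 1 + min p0 (1 / (2 * C))" using m by simp
    finally show ?thesis unfolding p_def by linarith
  qed
  have rc: "m * (1 / m + 5/2 * (1 / m^3)) - 1 = 5 / (2 * m^2)" using m by (simp add: field_simps power_def)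
  have me: "m * (300 * C / real \<Omega> ^ 5) = e" unfolding e_def Om by simp
  show "let p\<rho> = (real \<Omega> - 1) * \<rho> - 1;
             qb = 1 / (real \<Omega> - 1)^2;
             \<rho>c = 1 / (real \<Omega> - 1) + 5/2 * (1 / (real \<Omega> - 1)^3)
         in (\<rho> > \<rho>c + 300 * C / real \<Omega> ^ 5 \<longrightarrow> survives_pos p\<rho> qb) \<and>
            (\<rho> < \<rho>c - 300 * C / real \<Omega> ^ 5 \<longrightarrow> dies_out_as p\<rho> qb)"
    unfolding Let_def m_def[symmetric] p_def[symmetric] q_def[symmetric]
  proof (intro conjI impI)
    assume gt: "1 / m + 5 / 2 * (1 / m ^ 3) + 300 * C / real \<Omega> ^ 5 < \<rho>"
    have "m * (1 / m + 5 / 2 * (1 / m ^ 3) + 300 * C / real \<Omega> ^ 5) < m * \<rho>"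
      using gt m by (intro mult_strict_left_mono) auto
    then have pg: "5 / (2 * m^2) + e < p" unfolding p_def using rc me by (simp add: distrib_left)
    have "0 < 5 / (2 * m^2)" using m by simp
    then have p0': "0 < p" using pg e0 by linarith
    have "q < 2/5 * p * (1 - C * p)" unfolding q_def
      using surv_arith[OF assms(1) _ eps pg _ e0] m pmu by simp
    then show "survives_pos p q" using hyp[of p q] p0' pmu q by simp
  next
    assume lt: "\<rho> < 1 / m + 5 / 2 * (1 / m ^ 3) - 300 * C / real \<Omega> ^ 5"
    have "m * \<rho> < m * (1 / m + 5 / 2 * (1 / m ^ 3) - 300 * C / real \<Omega> ^ 5)"
      using lt m by (intro mult_strict_left_mono) auto
    then have pl: "p < 5 / (2 * m^2) - e" unfolding p_def using rc me by (simp add: right_diff_distrib)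
    show "dies_out_as p q"
    proof (cases "p \<le> 0")
      case True
      show ?thesis using dies_subcrit[OF pgt True q] .
    next
      case False
      then have "0 < p" by simp
      have "q > 2/5 * p * (1 + C * p)" unfolding q_def
        using die_arith[OF assms(1) _ eps2 \<open>0 < p\<close> pl] m by simp
      then show ?thesis using hyp[of p q] \<open>0 < p\<close> pmu q by simp
    qed
  qed
qed

end
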